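(* Let $G=(V,E)$ have $|V|=2$ (i.e. $G$ is the path $\mathcal P_2$), let $N=3$, $\varepsilon\in[0,\frac12]$, $\gamma\in(0,1)$ and $s_0\in S_{nc}$. Then $\Gamma_3(G|s_0,\gamma,\varepsilon)$ admits a positional trigger strategies profile $\bar\sigma$ (which is then unique) if and only if $\varepsilon\in[0,\frac12)$ and $\gamma\in\left[\sqrt{\frac{\varepsilon}{1-\varepsilon}},\frac{1}{2-2\varepsilon}\right]$.
   Context: Setting. $G=(V,E)$ is a finite, simple, connected, undirected graph; $N\ge 3$ is an integer; $\gamma\in(0,1)$ and $\varepsilon\in[0,\frac1{N-1}]$ are parameters. There are $N$ tokens: cops $C_1,\dots,C_{N-1}$ (tokens $1,\dots,N-1$) and the robber $R$ (token $N$). A state is $s=(x^1,\dots,x^N,n)$ where $x^i\in V$ is the position of token $i$ and $n\in\{1,\dots,N\}$ is the token that moves next; $S^n$ denotes the set of states with token $n$ to move. A state is a capture state if $x^i=x^N$ for some $i\le N-1$; $S_{nc}$ is the set of noncapture states. In each turn exactly one token, the one to move, moves to a vertex of its closed neighbourhood (it may stay put); the order of moves is $C_1,C_2,\dots,C_{N-1},R,C_1,\dots$. Starting from an initial state $s_0\in S_{nc}$ at time $0$, the capture time is the first time $t$ at which a capture state occurs (infinite if never); after capture the game is over. Auxiliary games. For $m\in\{1,\dots,N\}$, $\Gamma_N^m(G|s_0,\gamma,\varepsilon)$ is the two-player zero-sum game in which player $P_m$ controls token $m$ and player $P_{-m}$ controls all other tokens, with the following payoff to $P_m$ ($P_{-m}$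 receives its negative): $0$ if no capture ever occurs; if capture occurs at time $t$: for $m=N$, $-\gamma^t$; for $m\le N-1$, $\frac{1-\varepsilon}{K}\gamma^t$ if exactly $K\in\{1,\dots,N-2\}$ cops, including $C_m$, are on the robber's vertex, $\frac{\varepsilon}{N-K-1}\gamma^t$ if exactly $K\in\{1,\dots,N-2\}$ cops, not including $C_m$, are on the robber's vertex, and $\frac{\gamma^t}{N-1}$ if all $N-1$ cops are on the robber's vertex. $\Gamma^N_N$ is the modified cops-and-robber (CR) game. A pure positional strategy for token $n$ maps each state in $S^n\cap S_{nc}$ to an allowed next vertex. Each $\Gamma^m_N$ has optimal pure positional strategies (optimal from every initial state). For $m,n\in\{1,\dots,N\}$, $\phi^n_m$ denotes the strategy of token $n$ in a chosen pair of optimal pure positional strategies of $\Gamma^m_N$ (so $\phi^m_m$ is $P_m$'s optimal strategy and $(\phi^n_m)_{n\ne m}$ is $P_{-m}$'s). $\widehat\Sigma^n$ is the set of pure positional strategies of token $n$ that are components of optimal strategy pairs of $\Gamma^N_N$ (CR-optimal strategies). Trigger strategies. Given a choice of $(\phi^n_m)_{n,m}$, the trigger strategies profile $\bar\sigma=(\bar\sigma^1,\dots,\bar\sigma^N)$ of the $N$-player SCAR game $\Gamma_N(G|s_0,\gamma,\varepsilon)$ (same board and moves; player $n$ controls token $n$) is: token $n$, at current state $s$, plays $\phi^n_n(s)$ as long as every other player $m$ has followed $\phi^m_m$, and plays $\phi^n_m(s)$ from the moment a player $m\neq n$ deviates from $\phi^m_m$. Different choices of the optimal strategies give different trigger strategies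 profiles. $\bar\sigma$ is called positional if for all $n,m\in\{1,\dots,N\}$ there is $\widehat\sigma^n\in\widehat\Sigma^n$ with $\phi^n_m(s)=\widehat\sigma^n(s)$ for every state $s\in S^n\cap S_{nc}$ reachable from $s_0$ by a finite sequence of legal moves passing only through noncapture states; otherwise $\bar\sigma$ is nonpositional. *)

theory Defs
  imports Complex_Main
begin

text \<open>A state is a pair (xs, n): xs ! (i - 1) is the position of token i
  (tokens 1..N; token N is the robber), and n is the token that moves next.\<close>

type_synonym 'v state = "'v list \<times> nat"

definition pos :: "'v state \<Rightarrow> nat \<Rightarrow> 'v" where
  "pos s i = fst s ! (i - 1)"

definition mover :: "'v state \<Rightarrow> nat" where
  "mover s = snd s"

definition simple_connected_graph :: "'v set \<Rightarrow> ('v \<Rightarrow> 'v \<Rightarrow> bool) \<Rightarrow> bool" where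
  "simple_connected_graph V E \<longleftrightarrow> finite V \<and> V \<noteq> {} \<and>
     (\<forall>x y. E x y \<longrightarrow> x \<in> V \<and> y \<in> V) \<and>
     (\<forall>x y. E x y \<longrightarrow> E y x) \<and> (\<forall>x. \<not> E x x) \<and>
     (\<forall>x\<in>V. \<forall>y\<in>V. (x, y) \<in> {(a, b). E a b}\<^sup>*)"

definition cnb :: "('v \<Rightarrow> 'v \<Rightarrow> bool) \<Rightarrow> 'v \<Rightarrow> 'v set" where
  "cnb E x = {u. u = x \<or> E x u}"

definition valid_state :: "'v set \<Rightarrow> nat \<Rightarrow> 'v state \<Rightarrow> bool" where
  "valid_state V N s \<longleftrightarrow> length (fst s) = N \<and> set (fst s) \<subseteq> V \<and> 1 \<le> snd s \<and> snd s \<le> N"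

definition capture :: "nat \<Rightarrow> 'v state \<Rightarrow> bool" where
  "capture N s \<longleftrightarrow> (\<exists>i\<in>{1..N-1}. pos s i = pos s N)"

definition move :: "nat \<Rightarrow> 'v state \<Rightarrow> 'v \<Rightarrow> 'v state" where
  "move N s v = ((fst s)[snd s - 1 := v], snd s mod N + 1)"

text \<open>General (pure, history dependent) strategies: histories are the lists of
  states visited so far (the current state is the last one).\<close>
type_synonym 'v hstrat = "'v state list \<Rightarrow> 'v"

definition legal_h :: "('v \<Rightarrow> 'v \<Rightarrow> bool) \<Rightarrow> nat \<Rightarrow> 'v hstrat \<Rightarrow> bool" where
  "legal_h E n \<tau> \<longleftrightarrow> (\<forall>h. h \<noteq> [] \<longrightarrow> mover (last h) = n \<longrightarrow> \<tau> h \<in> cnb E (pos (last h) n))"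

definition legal_p :: "('v \<Rightarrow> 'v \<Rightarrow> bool) \<Rightarrow> nat \<Rightarrow> ('v state \<Rightarrow> 'v) \<Rightarrow> bool" where
  "legal_p E n \<sigma> \<longleftrightarrow> (\<forall>s. mover s = n \<longrightarrow> \<sigma> s \<in> cnb E (pos s n))"

definition pos_to_h :: "(nat \<Rightarrow> 'v state \<Rightarrow> 'v) \<Rightarrow> nat \<Rightarrow> 'v hstrat" where
  "pos_to_h \<phi> = (\<lambda>n h. \<phi> n (last h))"

fun hist :: "nat \<Rightarrow> (nat \<Rightarrow> 'v hstrat) \<Rightarrow> 'v state \<Rightarrow> nat \<Rightarrow> 'v state list" where
  "hist N \<sigma> s0 0 = [s0]"
| "hist N \<sigma> s0 (Suc t) =
     (let h = hist N \<sigma> s0 t in h @ [move N (last h) (\<sigma> (mover (last h)) h)])"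

definition play :: "nat \<Rightarrow> (nat \<Rightarrow> 'v hstrat) \<Rightarrow> 'v state \<Rightarrow> nat \<Rightarrow> 'v state" where
  "play N \<sigma> s0 t = last (hist N \<sigma> s0 t)"

definition reward :: "nat \<Rightarrow> real \<Rightarrow> nat \<Rightarrow> 'v state \<Rightarrow> real" where
  "reward N \<epsilon> m s =
     (if m = N then -1
      else (let K = card {i\<in>{1..N-1}. pos s i = pos s N} in
            if K = N - 1 then 1 / real (N - 1)
            else if pos s m = pos s N then (1 - \<epsilon>) / real K
            else \<epsilon> / real (N - K - 1)))"

definition payoff :: "nat \<Rightarrow> real \<Rightarrow> real \<Rightarrow> nat \<Rightarrow> (nat \<Rightarrow> 'v hstrat) \<Rightarrow> 'v state \<Rightarrow> real" where
  "payoff N \<gamma> \<epsilon> m \<sigma> s0 =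
     (if \<exists>t. capture N (play N \<sigma> s0 t)
      then (let T = (LEAST t. capture N (play N \<sigma> s0 t)) in
            reward N \<epsilon> m (play N \<sigma> s0 T) * \<gamma> ^ T)
      else 0)"

text \<open>\<phi> :: token \<Rightarrow> positional strategy is a pair of optimal pure positional
  strategies of \<Gamma>^m_N (P_m controls token m, P_{-m} all others),
  optimal (saddle point against arbitrary deviations) from every initial
  noncapture state.\<close>
definition opt_pair ::
  "'v set \<Rightarrow> ('v \<Rightarrow> 'v \<Rightarrow> bool) \<Rightarrow> nat \<Rightarrow> real \<Rightarrow> real \<Rightarrow> nat \<Rightarrow> (nat \<Rightarrow> 'v state \<Rightarrow> 'v) \<Rightarrow> bool" where
  "opt_pair V E N \<gamma> \<epsilon> m \<phi> \<longleftrightarrow>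
     (\<forall>n\<in>{1..N}. legal_p E n (\<phi> n)) \<and>
     (\<forall>s0. valid_state V N s0 \<and> \<not> capture N s0 \<longrightarrow>
        (\<forall>\<tau>. legal_h E m \<tau> \<longrightarrow>
            payoff N \<gamma> \<epsilon> m ((pos_to_h \<phi>)(m := \<tau>)) s0 \<le> payoff N \<gamma> \<epsilon> m (pos_to_h \<phi>) s0) \<and>
        (\<forall>\<tau>. (\<forall>n\<in>{1..N}. n \<noteq> m \<longrightarrow> legal_h E n (\<tau> n)) \<longrightarrow>
            payoff N \<gamma> \<epsilon> m (pos_to_h \<phi>) s0 \<le> payoff N \<gamma> \<epsilon> m (\<tau>(m := pos_to_h \<phi> m)) s0))"

definition CR_opt ::
  "'v set \<Rightarrow> ('v \<Rightarrow> 'v \<Rightarrow> bool) \<Rightarrow> nat \<Rightarrow> real \<Rightarrow> real \<Rightarrow> nat \<Rightarrow> ('v state \<Rightarrow> 'v) \<Rightarrow> bool" where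
  "CR_opt V E N \<gamma> \<epsilon> n \<sigma> \<longleftrightarrow> (\<exists>\<phi>. opt_pair V E N \<gamma> \<epsilon> N \<phi> \<and> \<phi> n = \<sigma>)"

inductive reach :: "('v \<Rightarrow> 'v \<Rightarrow> bool) \<Rightarrow> nat \<Rightarrow> 'v state \<Rightarrow> 'v state \<Rightarrow> bool"
  for E N s0 where
  refl: "reach E N s0 s0"
| step: "reach E N s0 s \<Longrightarrow> \<not> capture N s \<Longrightarrow> v \<in> cnb E (pos s (mover s)) \<Longrightarrow>
         reach E N s0 (move N s v)"

text \<open>A choice of optimal strategies: \<phi> m n is \<phi>^n_m, the strategy of token n
  in the chosen optimal pair of \<Gamma>^m_N.\<close>
definition trigger_choice ::
  "'v set \<Rightarrow> ('v \<Rightarrow> 'v \<Rightarrow> bool) \<Rightarrow> nat \<Rightarrow> real \<Rightarrow> real \<Rightarrow> (nat \<Rightarrow> nat \<Rightarrow> 'v state \<Rightarrow> 'v) \<Rightarrow> bool" where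
  "trigger_choice V E N \<gamma> \<epsilon> \<phi> \<longleftrightarrow> (\<forall>m\<in>{1..N}. opt_pair V E N \<gamma> \<epsilon> m (\<phi> m))"

definition positional_trigger ::
  "'v set \<Rightarrow> ('v \<Rightarrow> 'v \<Rightarrow> bool) \<Rightarrow> nat \<Rightarrow> real \<Rightarrow> real \<Rightarrow> 'v state \<Rightarrow> (nat \<Rightarrow> nat \<Rightarrow> 'v state \<Rightarrow> 'v) \<Rightarrow> bool" where
  "positional_trigger V E N \<gamma> \<epsilon> s0 \<phi> \<longleftrightarrow> trigger_choice V E N \<gamma> \<epsilon> \<phi> \<and>
     (\<forall>n\<in>{1..N}. \<forall>m\<in>{1..N}. \<exists>\<sigma>. CR_opt V E N \<gamma> \<epsilon> n \<sigma> \<and>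
        (\<forall>s. reach E N s0 s \<and> mover s = n \<and> \<not> capture N s \<longrightarrow> \<phi> m n s = \<sigma> s))"

text \<open>The trigger strategy of token n (as a history-dependent strategy):
  play \<phi>^n_n as long as every other player k followed \<phi>^k_k; from the first
  deviation of a player k \<noteq> n on, play \<phi>^n_k.\<close>
definition trigger_strat :: "nat \<Rightarrow> (nat \<Rightarrow> nat \<Rightarrow> 'v state \<Rightarrow> 'v) \<Rightarrow> nat \<Rightarrow> 'v hstrat" where
  "trigger_strat N \<phi> n h =
     (let D = {t. Suc t < length h \<and> mover (h ! t) \<noteq> n \<and>
                  h ! Suc t \<noteq> move N (h ! t) (\<phi> (mover (h ! t)) (mover (h ! t)) (h ! t))}
      in if D \<noteq> {} then \<phi> (mover (h ! Min D)) n (last h) else \<phi> n n (last h))"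

definition is_hist :: "('v \<Rightarrow> 'v \<Rightarrow> bool) \<Rightarrow> nat \<Rightarrow> 'v state \<Rightarrow> 'v state list \<Rightarrow> bool" where
  "is_hist E N s0 h \<longleftrightarrow> h \<noteq> [] \<and> hd h = s0 \<and>
     (\<forall>i. Suc i < length h \<longrightarrow> \<not> capture N (h ! i) \<and>
        (\<exists>v\<in>cnb E (pos (h ! i) (mover (h ! i))). h ! Suc i = move N (h ! i) v))"

end

theory Submission
  imports Defs
begin

lemma Icc12: "{1..2::nat} = {1,2}" "{Suc 0..2} = {1,2}" by auto
lemma Icc3: "(m::nat) \<in> {1..3} \<longleftrightarrow> m = 1 \<or> m = 2 \<or> m = 3" by auto

lemma capture3: "capture 3 s \<longleftrightarrow> pos s 1 = pos s 3 \<or> pos s 2 = pos s 3"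
  by (simp add: capture_def Icc12)

lemma hist_ne: "hist N \<sigma> s0 t \<noteq> []"
  by (induction t) (auto simp: Let_def)

lemma play_0: "play N \<sigma> s0 0 = s0" by (simp add: play_def)

lemma play_Suc: "play N \<sigma> s0 (Suc t) = move N (play N \<sigma> s0 t) (\<sigma> (mover (play N \<sigma> s0 t)) (hist N \<sigma> s0 t))"
  by (simp add: play_def Let_def)

lemma stepV: "play N \<sigma> s0 t = (xs, k) \<Longrightarrow> \<sigma> k (hist N \<sigma> s0 t) = v \<Longrightarrow>
   play N \<sigma> s0 (Suc t) = (xs[k - 1 := v], k mod N + 1)"
  by (simp add: play_Suc move_def mover_def)

lemma follow: "\<sigma> k = pos_to_h f k \<Longrightarrow> \<sigma> k (hist N \<sigma> s0 t) = f k (play N \<sigma> s0 t)"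
  by (simp add: pos_to_h_def play_def)

lemma payoff_at:
  assumes "\<forall>t<T. \<not> capture N (play N \<sigma> s0 t)" "capture N (play N \<sigma> s0 T)"
  shows "payoff N \<gamma> \<epsilon> m \<sigma> s0 = reward N \<epsilon> m (play N \<sigma> s0 T) * \<gamma> ^ T"
proof -
  have "(LEAST t. capture N (play N \<sigma> s0 t)) = T"
    by (rule Least_equality) (use assms in \<open>auto simp: not_less[symmetric]\<close>)
  thus ?thesis using assms unfolding payoff_def by auto
qed

lemma all_lt1: "P 0 \<Longrightarrow> \<forall>t<1::nat. P t" by auto
lemma all_lt2: "P 0 \<Longrightarrow> P 1 \<Longrightarrow> \<forall>t<2::nat. P t" by (auto simp: less_2_cases_iff)
lemma all_lt3: "P 0 \<Longrightarrow> P 1 \<Longrightarrow> P 2 \<Longrightarrow> \<forall>t<3::nat. P t"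
  by (metis One_nat_def Suc_1 less_Suc_eq numeral_3_eq_3 less_one)

lemma payoff3_lb:
  assumes "\<forall>t<T0. \<not> capture 3 (play 3 \<sigma> s0 t)" "0 \<le> \<gamma>" "\<gamma> \<le> 1"
  shows "- (\<gamma> ^ T0) \<le> payoff 3 \<gamma> \<epsilon> 3 \<sigma> s0"
proof (cases "\<exists>t. capture 3 (play 3 \<sigma> s0 t)")
  case True
  define T where "T = (LEAST t. capture 3 (play 3 \<sigma> s0 t))"
  have c: "capture 3 (play 3 \<sigma> s0 T)" unfolding T_def using True by (rule LeastI_ex)
  hence "T0 \<le> T" using assms(1) not_less by blast
  hence "\<gamma> ^ T \<le> \<gamma> ^ T0" using assms by (simp add: power_decreasing)
  thus ?thesis using True unfolding payoff_def T_def[symmetric] by (simp add: reward_def Let_def)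
next
  case False thus ?thesis using assms by (simp add: payoff_def)
qed

definition Phi :: "('v \<Rightarrow> 'v \<Rightarrow> bool) \<Rightarrow> nat \<Rightarrow> 'v state \<Rightarrow> 'v" where
  "Phi E n s = (if pos s 3 \<in> cnb E (pos s n) then pos s 3 else pos s n)"

lemma cnb_self: "x \<in> cnb E x" by (simp add: cnb_def)

lemma legal_Phi: "legal_p E n (Phi E n)"
  by (simp add: legal_p_def Phi_def cnb_self)
lemma legal_h_Phi: "legal_h E n (pos_to_h (Phi E) n)"
  by (simp add: legal_h_def pos_to_h_def Phi_def cnb_self)

locale P2 =
  fixes E :: "'v \<Rightarrow> 'v \<Rightarrow> bool" and u w :: 'v
  assumes uw: "u \<noteq> w" and cu: "cnb E u = {u,w}" and cw: "cnb E w = {u,w}"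
begin

lemma capS: "\<not> capture 3 ([u,u,w], k)" using uw by (simp add: capture3 pos_def)
lemma cap1: "capture 3 ([w,u,w], k)" by (simp add: capture3 pos_def)
lemma cap2: "capture 3 ([u,w,w], k)" by (simp add: capture3 pos_def)
lemma cap3: "capture 3 ([u,u,u], k)" by (simp add: capture3 pos_def)

lemma Kset: "{i\<in>{1..3-1}. pos s i = pos s 3} = {i. (i = 1 \<and> pos s 1 = pos s 3) \<or> (i = 2 \<and> pos s 2 = pos s 3)}"
  by (auto simp: Icc12)
lemma rw1: "reward 3 \<epsilon> 1 ([w,u,w],k) = 1 - \<epsilon>" "reward 3 \<epsilon> 2 ([w,u,w],k) = \<epsilon>"
proof -
  have "{i\<in>{1..3-1}. pos ([w,u,w],k) i = pos ([w,u,w],k) 3} = {1}" unfolding Kset using uw by (auto simp: pos_def)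
  thus "reward 3 \<epsilon> 1 ([w,u,w],k) = 1 - \<epsilon>" "reward 3 \<epsilon> 2 ([w,u,w],k) = \<epsilon>"
    using uw by (simp_all add: reward_def Let_def pos_def)
qed
lemma rw2: "reward 3 \<epsilon> 1 ([u,w,w],k) = \<epsilon>" "reward 3 \<epsilon> 2 ([u,w,w],k) = 1 - \<epsilon>"
proof -
  have "{i\<in>{1..3-1}. pos ([u,w,w],k) i = pos ([u,w,w],k) 3} = {2}" unfolding Kset using uw by (auto simp: pos_def)
  thus "reward 3 \<epsilon> 1 ([u,w,w],k) = \<epsilon>" "reward 3 \<epsilon> 2 ([u,w,w],k) = 1 - \<epsilon>"
    using uw by (simp_all add: reward_def Let_def pos_def)
qed
lemma rw3: "reward 3 \<epsilon> 1 ([u,u,u],k) = 1/2" "reward 3 \<epsilon> 2 ([u,u,u],k) = 1/2"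
proof -
  have "{i\<in>{1..3-1}. pos ([u,u,u],k) i = pos ([u,u,u],k) 3} = {1,2}" unfolding Kset by (auto simp: pos_def)
  thus "reward 3 \<epsilon> 1 ([u,u,u],k) = 1/2" "reward 3 \<epsilon> 2 ([u,u,u],k) = 1/2"
    by (simp_all add: reward_def Let_def)
qed
lemma rwS: "reward 3 \<epsilon> (Suc 0) ([w,u,w],k) = 1 - \<epsilon>" "reward 3 \<epsilon> (Suc 0) ([u,w,w],k) = \<epsilon>"
  "reward 3 \<epsilon> (Suc 0) ([u,u,u],k) = 1/2"
  using rw1 rw2 rw3 by simp_all
lemma rwR: "reward 3 \<epsilon> 3 s = -1" by (simp add: reward_def)

lemma PhiS: "k \<in> {1,2,3} \<Longrightarrow> Phi E k ([u,u,w],k) = w"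
  using cu cw by (auto simp: Phi_def pos_def)

lemma dev:
  assumes "play 3 \<sigma> s0 t = ([u,u,w],k)" "k \<in> {1,2,3}" "legal_h E k (\<sigma> k)"
  shows "\<sigma> k (hist 3 \<sigma> s0 t) = u \<or> \<sigma> k (hist 3 \<sigma> s0 t) = w"
proof -
  have "last (hist 3 \<sigma> s0 t) = ([u,u,w],k)" using assms(1) by (simp add: play_def)
  hence "\<sigma> k (hist 3 \<sigma> s0 t) \<in> cnb E (pos ([u,u,w],k) k)"
    using assms(3) hist_ne unfolding legal_h_def by (metis mover_def snd_conv)
  moreover have "pos ([u,u,w],k) k = u \<or> pos ([u,u,w],k) k = w"
    using assms(2) by (auto simp: pos_def)
  ultimately show ?thesis using cu cw by (metis empty_iff insert_iff)
qed

lemma nxtF: "play 3 \<sigma> s0 t = ([u,u,w],k) \<Longrightarrow> k \<in> {1,2,3} \<Longrightarrow> \<sigma> k = pos_to_h (Phi E) k \<Longrightarrow>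
  play 3 \<sigma> s0 (Suc t) = ([u,u,w][k - 1 := w], if k = 1 then 2 else if k = 2 then 3 else 1)"
proof -
  have e: "k mod 3 + 1 = (if k = 1 then 2 else if k = 2 then 3 else 1)" if "k \<in> {1,2,3}" for k :: nat using that by auto
  show "play 3 \<sigma> s0 t = ([u,u,w],k) \<Longrightarrow> k \<in> {1,2,3} \<Longrightarrow> \<sigma> k = pos_to_h (Phi E) k \<Longrightarrow>
  play 3 \<sigma> s0 (Suc t) = ([u,u,w][k - 1 := w], if k = 1 then 2 else if k = 2 then 3 else 1)"
    unfolding e[symmetric] proof (rule stepV)
  assume a: "play 3 \<sigma> s0 t = ([u,u,w],k)" "k \<in> {1,2,3}" "\<sigma> k = pos_to_h (Phi E) k"
  have "\<sigma> k (hist 3 \<sigma> s0 t) = Phi E k (play 3 \<sigma> s0 t)" using a(3) by (rule follow)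
  thus "\<sigma> k (hist 3 \<sigma> s0 t) = w" using a(1,2) PhiS by simp
qed
qed

lemma nxtD: "play 3 \<sigma> s0 t = ([u,u,w],k) \<Longrightarrow> k \<in> {1,2,3} \<Longrightarrow> legal_h E k (\<sigma> k) \<Longrightarrow>
  play 3 \<sigma> s0 (Suc t) = ([u,u,w][k - 1 := u], if k = 1 then 2 else if k = 2 then 3 else 1) \<or>
  play 3 \<sigma> s0 (Suc t) = ([u,u,w][k - 1 := w], if k = 1 then 2 else if k = 2 then 3 else 1)"
proof -
  assume a: "play 3 \<sigma> s0 t = ([u,u,w],k)" "k \<in> {1,2,3}" "legal_h E k (\<sigma> k)"
  have e: "k mod 3 + 1 = (if k = 1 then 2 else if k = 2 then 3 else 1)" using a(2) by auto
  show ?thesis unfolding e[symmetric] using dev[OF a] stepV[OF a(1)] by metis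
qed

lemma pay1: "play 3 \<sigma> s0 0 = ([u,u,w],a) \<Longrightarrow> play 3 \<sigma> s0 1 = X \<Longrightarrow> capture 3 X \<Longrightarrow>
  payoff 3 \<gamma> \<epsilon> m \<sigma> s0 = reward 3 \<epsilon> m X * \<gamma>"
  using payoff_at[of 1 3 \<sigma> s0] all_lt1[of "\<lambda>t. \<not> capture 3 (play 3 \<sigma> s0 t)"] capS by auto
lemma pay2: "play 3 \<sigma> s0 0 = ([u,u,w],a) \<Longrightarrow> play 3 \<sigma> s0 1 = ([u,u,w],b) \<Longrightarrow> play 3 \<sigma> s0 2 = X \<Longrightarrow> capture 3 X \<Longrightarrow>
  payoff 3 \<gamma> \<epsilon> m \<sigma> s0 = reward 3 \<epsilon> m X * \<gamma>^2"
  using payoff_at[of 2 3 \<sigma> s0] all_lt2[of "\<lambda>t. \<not> capture 3 (play 3 \<sigma> s0 t)"] capS by auto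
lemma pay3: "play 3 \<sigma> s0 0 = ([u,u,w],a) \<Longrightarrow> play 3 \<sigma> s0 1 = ([u,u,w],b) \<Longrightarrow> play 3 \<sigma> s0 2 = ([u,u,w],c) \<Longrightarrow>
  play 3 \<sigma> s0 3 = X \<Longrightarrow> capture 3 X \<Longrightarrow>
  payoff 3 \<gamma> \<epsilon> m \<sigma> s0 = reward 3 \<epsilon> m X * \<gamma>^3"
  using payoff_at[of 3 3 \<sigma> s0] all_lt3[of "\<lambda>t. \<not> capture 3 (play 3 \<sigma> s0 t)"] capS by auto

end
context P2 begin

lemma o1_f1: assumes s: "play 3 \<sigma> s0 0 = ([u,u,w],1)" and F: "\<sigma> 1 = pos_to_h (Phi E) 1"
  shows "payoff 3 \<gamma> \<epsilon> m \<sigma> s0 = reward 3 \<epsilon> m ([w,u,w],2) * \<gamma>"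
proof -
  have p1: "play 3 \<sigma> s0 1 = ([w,u,w],2)" using nxtF[OF s _ F] by (simp add: numeral_2_eq_2 numeral_3_eq_3)
  show ?thesis using pay1[OF s p1 cap1] .
qed

lemma o2_f2: assumes s: "play 3 \<sigma> s0 0 = ([u,u,w],2)" and F: "\<sigma> 2 = pos_to_h (Phi E) 2"
  shows "payoff 3 \<gamma> \<epsilon> m \<sigma> s0 = reward 3 \<epsilon> m ([u,w,w],3) * \<gamma>"
proof -
  have p1: "play 3 \<sigma> s0 1 = ([u,w,w],3)" using nxtF[OF s _ F] by (simp add: numeral_2_eq_2 numeral_3_eq_3)
  show ?thesis using pay1[OF s p1 cap2] .
qed

lemma o3_f3: assumes s: "play 3 \<sigma> s0 0 = ([u,u,w],3)" and F: "\<sigma> 3 = pos_to_h (Phi E) 3"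
  shows "play 3 \<sigma> s0 1 = ([u,u,w],1)"
  using nxtF[OF s _ F] by (simp add: numeral_2_eq_2 numeral_3_eq_3)

lemma o3_f31: assumes s: "play 3 \<sigma> s0 0 = ([u,u,w],3)" and F: "\<sigma> 3 = pos_to_h (Phi E) 3" "\<sigma> 1 = pos_to_h (Phi E) 1"
  shows "payoff 3 \<gamma> \<epsilon> m \<sigma> s0 = reward 3 \<epsilon> m ([w,u,w],2) * \<gamma>^2"
proof -
  have p1: "play 3 \<sigma> s0 1 = ([u,u,w],1)" using o3_f3[OF s F(1)] .
  have p2: "play 3 \<sigma> s0 2 = ([w,u,w],2)" using nxtF[OF p1 _ F(2)] by (simp add: numeral_2_eq_2 numeral_3_eq_3)
  show ?thesis using pay2[OF s p1 p2 cap1] .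
qed

lemma o1_f2: assumes s: "play 3 \<sigma> s0 0 = ([u,u,w],1)" and L: "legal_h E 1 (\<sigma> 1)"
  and F: "\<sigma> 2 = pos_to_h (Phi E) 2"
  shows "payoff 3 \<gamma> \<epsilon> m \<sigma> s0 = reward 3 \<epsilon> m ([w,u,w],2) * \<gamma> \<or>
         payoff 3 \<gamma> \<epsilon> m \<sigma> s0 = reward 3 \<epsilon> m ([u,w,w],3) * \<gamma>^2"
proof -
  have "play 3 \<sigma> s0 1 = ([u,u,w],2) \<or> play 3 \<sigma> s0 1 = ([w,u,w],2)" using nxtD[OF s _ L] by (simp add: numeral_2_eq_2 numeral_3_eq_3)
  thus ?thesis
  proof
    assume p1: "play 3 \<sigma> s0 1 = ([u,u,w],2)"
    have p2: "play 3 \<sigma> s0 2 = ([u,w,w],3)" using nxtF[OF p1 _ F] by (simp add: numeral_2_eq_2 numeral_3_eq_3)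
    show ?thesis using pay2[OF s p1 p2 cap2] by simp
  next
    assume p1: "play 3 \<sigma> s0 1 = ([w,u,w],2)"
    show ?thesis using pay1[OF s p1 cap1] by simp
  qed
qed

lemma o2_f13: assumes s: "play 3 \<sigma> s0 0 = ([u,u,w],2)" and L: "legal_h E 2 (\<sigma> 2)"
  and F: "\<sigma> 3 = pos_to_h (Phi E) 3" "\<sigma> 1 = pos_to_h (Phi E) 1"
  shows "payoff 3 \<gamma> \<epsilon> m \<sigma> s0 = reward 3 \<epsilon> m ([u,w,w],3) * \<gamma> \<or>
         payoff 3 \<gamma> \<epsilon> m \<sigma> s0 = reward 3 \<epsilon> m ([w,u,w],2) * \<gamma>^3"
proof -
  have "play 3 \<sigma> s0 1 = ([u,u,w],3) \<or> play 3 \<sigma> s0 1 = ([u,w,w],3)" using nxtD[OF s _ L] by (simp add: numeral_2_eq_2 numeral_3_eq_3)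
  thus ?thesis
  proof
    assume p1: "play 3 \<sigma> s0 1 = ([u,u,w],3)"
    have p2: "play 3 \<sigma> s0 2 = ([u,u,w],1)" using nxtF[OF p1 _ F(1)] by (simp add: numeral_2_eq_2 numeral_3_eq_3)
    have p3: "play 3 \<sigma> s0 3 = ([w,u,w],2)" using nxtF[OF p2 _ F(2)] by (simp add: numeral_2_eq_2 numeral_3_eq_3)
    show ?thesis using pay3[OF s p1 p2 p3 cap1] by simp
  next
    assume p1: "play 3 \<sigma> s0 1 = ([u,w,w],3)"
    show ?thesis using pay1[OF s p1 cap2] by simp
  qed
qed

lemma o2_f1: assumes s: "play 3 \<sigma> s0 0 = ([u,u,w],2)" and L: "legal_h E 2 (\<sigma> 2)" "legal_h E 3 (\<sigma> 3)"
  and F: "\<sigma> 1 = pos_to_h (Phi E) 1"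
  shows "payoff 3 \<gamma> \<epsilon> m \<sigma> s0 = reward 3 \<epsilon> m ([u,w,w],3) * \<gamma> \<or>
         payoff 3 \<gamma> \<epsilon> m \<sigma> s0 = reward 3 \<epsilon> m ([u,u,u],1) * \<gamma>^2 \<or>
         payoff 3 \<gamma> \<epsilon> m \<sigma> s0 = reward 3 \<epsilon> m ([w,u,w],2) * \<gamma>^3"
proof -
  have "play 3 \<sigma> s0 1 = ([u,u,w],3) \<or> play 3 \<sigma> s0 1 = ([u,w,w],3)" using nxtD[OF s _ L(1)] by (simp add: numeral_2_eq_2 numeral_3_eq_3)
  thus ?thesis
  proof
    assume p1: "play 3 \<sigma> s0 1 = ([u,u,w],3)"
    have "play 3 \<sigma> s0 2 = ([u,u,u],1) \<or> play 3 \<sigma> s0 2 = ([u,u,w],1)" using nxtD[OF p1 _ L(2)] by (simp add: numeral_2_eq_2 numeral_3_eq_3)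
    thus ?thesis
    proof
      assume p2: "play 3 \<sigma> s0 2 = ([u,u,u],1)"
      show ?thesis using pay2[OF s p1 p2 cap3] by simp
    next
      assume p2: "play 3 \<sigma> s0 2 = ([u,u,w],1)"
      have p3: "play 3 \<sigma> s0 3 = ([w,u,w],2)" using nxtF[OF p2 _ F] by (simp add: numeral_2_eq_2 numeral_3_eq_3)
      show ?thesis using pay3[OF s p1 p2 p3 cap1] by simp
    qed
  next
    assume p1: "play 3 \<sigma> s0 1 = ([u,w,w],3)"
    show ?thesis using pay1[OF s p1 cap2] by simp
  qed
qed

lemma o3_f23: assumes s: "play 3 \<sigma> s0 0 = ([u,u,w],3)" and L: "legal_h E 1 (\<sigma> 1)"
  and F: "\<sigma> 3 = pos_to_h (Phi E) 3" "\<sigma> 2 = pos_to_h (Phi E) 2"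
  shows "payoff 3 \<gamma> \<epsilon> m \<sigma> s0 = reward 3 \<epsilon> m ([w,u,w],2) * \<gamma>^2 \<or>
         payoff 3 \<gamma> \<epsilon> m \<sigma> s0 = reward 3 \<epsilon> m ([u,w,w],3) * \<gamma>^3"
proof -
  have p1: "play 3 \<sigma> s0 1 = ([u,u,w],1)" using o3_f3[OF s F(1)] .
  have "play 3 \<sigma> s0 2 = ([u,u,w],2) \<or> play 3 \<sigma> s0 2 = ([w,u,w],2)" using nxtD[OF p1 _ L] by (simp add: numeral_2_eq_2 numeral_3_eq_3)
  thus ?thesis
  proof
    assume p2: "play 3 \<sigma> s0 2 = ([u,u,w],2)"
    have p3: "play 3 \<sigma> s0 3 = ([u,w,w],3)" using nxtF[OF p2 _ F(2)] by (simp add: numeral_2_eq_2 numeral_3_eq_3)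
    show ?thesis using pay3[OF s p1 p2 p3 cap2] by simp
  next
    assume p2: "play 3 \<sigma> s0 2 = ([w,u,w],2)"
    show ?thesis using pay2[OF s p1 p2 cap1] by simp
  qed
qed

lemma o3_f1: assumes s: "play 3 \<sigma> s0 0 = ([u,u,w],3)" and L: "legal_h E 3 (\<sigma> 3)"
  and F: "\<sigma> 1 = pos_to_h (Phi E) 1"
  shows "payoff 3 \<gamma> \<epsilon> m \<sigma> s0 = reward 3 \<epsilon> m ([u,u,u],1) * \<gamma> \<or>
         payoff 3 \<gamma> \<epsilon> m \<sigma> s0 = reward 3 \<epsilon> m ([w,u,w],2) * \<gamma>^2"
proof -
  have "play 3 \<sigma> s0 1 = ([u,u,u],1) \<or> play 3 \<sigma> s0 1 = ([u,u,w],1)" using nxtD[OF s _ L] by (simp add: numeral_2_eq_2 numeral_3_eq_3)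
  thus ?thesis
  proof
    assume p1: "play 3 \<sigma> s0 1 = ([u,u,u],1)"
    show ?thesis using pay1[OF s p1 cap3] by simp
  next
    assume p1: "play 3 \<sigma> s0 1 = ([u,u,w],1)"
    have p2: "play 3 \<sigma> s0 2 = ([w,u,w],2)" using nxtF[OF p1 _ F] by (simp add: numeral_2_eq_2 numeral_3_eq_3)
    show ?thesis using pay2[OF s p1 p2 cap1] by simp
  qed
qed

lemma o3_f2: assumes s: "play 3 \<sigma> s0 0 = ([u,u,w],3)" and L: "legal_h E 3 (\<sigma> 3)" "legal_h E 1 (\<sigma> 1)"
  and F: "\<sigma> 2 = pos_to_h (Phi E) 2"
  shows "payoff 3 \<gamma> \<epsilon> m \<sigma> s0 = reward 3 \<epsilon> m ([u,u,u],1) * \<gamma> \<or>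
         payoff 3 \<gamma> \<epsilon> m \<sigma> s0 = reward 3 \<epsilon> m ([w,u,w],2) * \<gamma>^2 \<or>
         payoff 3 \<gamma> \<epsilon> m \<sigma> s0 = reward 3 \<epsilon> m ([u,w,w],3) * \<gamma>^3"
proof -
  have "play 3 \<sigma> s0 1 = ([u,u,u],1) \<or> play 3 \<sigma> s0 1 = ([u,u,w],1)" using nxtD[OF s _ L(1)] by (simp add: numeral_2_eq_2 numeral_3_eq_3)
  thus ?thesis
  proof
    assume p1: "play 3 \<sigma> s0 1 = ([u,u,u],1)"
    show ?thesis using pay1[OF s p1 cap3] by simp
  next
    assume p1: "play 3 \<sigma> s0 1 = ([u,u,w],1)"
    have "play 3 \<sigma> s0 2 = ([u,u,w],2) \<or> play 3 \<sigma> s0 2 = ([w,u,w],2)" using nxtD[OF p1 _ L(2)] by (simp add: numeral_2_eq_2 numeral_3_eq_3)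
    thus ?thesis
    proof
      assume p2: "play 3 \<sigma> s0 2 = ([u,u,w],2)"
      have p3: "play 3 \<sigma> s0 3 = ([u,w,w],3)" using nxtF[OF p2 _ F] by (simp add: numeral_2_eq_2 numeral_3_eq_3)
      show ?thesis using pay3[OF s p1 p2 p3 cap2] by simp
    next
      assume p2: "play 3 \<sigma> s0 2 = ([w,u,w],2)"
      show ?thesis using pay2[OF s p1 p2 cap1] by simp
    qed
  qed
qed

end

lemma arj:
  fixes \<epsilon> \<gamma> :: real assumes "0 \<le> \<epsilon>" "\<epsilon> \<le> 1/2" "0 < \<gamma>" "\<gamma> < 1"
  shows "\<epsilon>*\<gamma>^2 \<le> (1-\<epsilon>)*\<gamma>" "\<epsilon>*\<gamma>^3 \<le> (1-\<epsilon>)*\<gamma>^2" "\<epsilon>*\<gamma>^3 \<le> (1-\<epsilon>)*\<gamma>"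
    "-\<gamma> \<le> -(\<gamma>^2)" "\<gamma>^2 < \<gamma>"
proof -
  have g2: "\<gamma>^2 \<le> \<gamma>" "\<gamma>^3 \<le> \<gamma>^2" "\<gamma>^2 < \<gamma>" using assms by (auto simp: power2_eq_square power3_eq_cube)
  have e: "\<epsilon> \<le> 1 - \<epsilon>" using assms by simp
  show "\<epsilon>*\<gamma>^2 \<le> (1-\<epsilon>)*\<gamma>" using mult_mono[OF e g2(1)] assms by simp
  show "\<epsilon>*\<gamma>^3 \<le> (1-\<epsilon>)*\<gamma>^2" using mult_mono[OF e g2(2)] assms by simp
  show "\<epsilon>*\<gamma>^3 \<le> (1-\<epsilon>)*\<gamma>" using mult_mono[OF e order_trans[OF g2(2) g2(1)]] assms by simp
  show "-\<gamma> \<le> -(\<gamma>^2)" using g2 by simp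
  show "\<gamma>^2 < \<gamma>" by (rule g2(3))
qed

lemma ari:
  fixes \<epsilon> \<gamma> :: real assumes "0 \<le> \<epsilon>" "\<epsilon> \<le> 1/2" "0 < \<gamma>" "\<gamma> < 1"
    and A1: "\<epsilon> \<le> (1-\<epsilon>)*\<gamma>^2" and A2: "(1-\<epsilon>)*\<gamma> \<le> 1/2"
  shows "\<epsilon>*\<gamma> \<le> \<gamma>^2/2" "\<epsilon>*\<gamma> \<le> (1-\<epsilon>)*\<gamma>^3" "(1-\<epsilon>)*\<gamma>^2 \<le> \<gamma>/2"
    "\<epsilon>*\<gamma> \<le> (1-\<epsilon>)*\<gamma>^2" "\<epsilon>*\<gamma>^2 \<le> \<gamma>/2" "\<epsilon>*\<gamma>^2 \<le> (1-\<epsilon>)*\<gamma>^3"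
proof -
  have g2: "\<gamma>^2 \<le> \<gamma>" using assms by (auto simp: power2_eq_square)
  have "(1-\<epsilon>)*\<gamma>^2 \<le> (1-\<epsilon>)*\<gamma>" by (rule mult_left_mono[OF g2]) (use assms in simp)
  hence b: "\<epsilon> \<le> (1-\<epsilon>)*\<gamma>" using A1 by linarith
  have "2*\<epsilon> \<le> \<gamma>"
  proof (rule ccontr)
    assume "\<not> 2*\<epsilon> \<le> \<gamma>"
    hence "\<gamma>^2 < (2*\<epsilon>)^2" using assms by (intro power_strict_mono) auto
    hence "(1-\<epsilon>)*\<gamma>^2 < (1-\<epsilon>)*(2*\<epsilon>)^2" using assms by (intro mult_strict_left_mono) auto
    moreover have "(1-\<epsilon>)*(2*\<epsilon>)^2 = \<epsilon> - \<epsilon>*(2*\<epsilon>-1)^2" by (simp add: power2_eq_square algebra_simps)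
    moreover have "0 \<le> \<epsilon>*(2*\<epsilon>-1)^2" using assms by simp
    ultimately show False using A1 by simp
  qed
  thus "\<epsilon>*\<gamma> \<le> \<gamma>^2/2" using mult_right_mono[of "2*\<epsilon>" \<gamma> \<gamma>] assms by (simp add: power2_eq_square)
  show "\<epsilon>*\<gamma> \<le> (1-\<epsilon>)*\<gamma>^3" using mult_right_mono[OF A1, of \<gamma>] assms by (simp add: power2_eq_square power3_eq_cube algebra_simps)
  show "(1-\<epsilon>)*\<gamma>^2 \<le> \<gamma>/2" using mult_right_mono[OF A2, of \<gamma>] assms by (simp add: power2_eq_square algebra_simps)
  show "\<epsilon>*\<gamma> \<le> (1-\<epsilon>)*\<gamma>^2" using mult_right_mono[OF b, of \<gamma>] assms by (simp add: power2_eq_square algebra_simps)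
  show "\<epsilon>*\<gamma>^2 \<le> \<gamma>/2" using mult_mono[OF assms(2) g2] assms by simp
  show "\<epsilon>*\<gamma>^2 \<le> (1-\<epsilon>)*\<gamma>^3" using mult_right_mono[OF b, of "\<gamma>^2"] assms by (simp add: power2_eq_square power3_eq_cube algebra_simps)
qed

context P2 begin

lemma PV: "payoff 3 \<gamma> \<epsilon> m (pos_to_h (Phi E)) ([u,u,w],1) = reward 3 \<epsilon> m ([w,u,w],2) * \<gamma>"
  "payoff 3 \<gamma> \<epsilon> m (pos_to_h (Phi E)) ([u,u,w],2) = reward 3 \<epsilon> m ([u,w,w],3) * \<gamma>"
  "payoff 3 \<gamma> \<epsilon> m (pos_to_h (Phi E)) ([u,u,w],3) = reward 3 \<epsilon> m ([w,u,w],2) * \<gamma>^2"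
  by (rule o1_f1 o2_f2 o3_f31; simp add: play_0)+

lemma clause1:
  fixes \<epsilon> \<gamma> :: real
  assumes L: "legal_h E m \<tau>" and m: "m \<in> {1,2,3}" and k: "k \<in> {1,2,3}"
    and ar: "0 \<le> \<epsilon>" "\<epsilon> \<le> 1/2" "0 < \<gamma>" "\<gamma> < 1"
  shows "payoff 3 \<gamma> \<epsilon> m ((pos_to_h (Phi E))(m := \<tau>)) ([u,u,w],k) \<le> payoff 3 \<gamma> \<epsilon> m (pos_to_h (Phi E)) ([u,u,w],k)"
proof -
  define \<sigma> where "\<sigma> = (pos_to_h (Phi E))(m := \<tau>)"
  have s: "play 3 \<sigma> ([u,u,w],k) 0 = ([u,u,w],k)" by (simp add: play_0)
  have Lm: "legal_h E m (\<sigma> m)" using L by (simp add: \<sigma>_def)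
  have F: "n \<noteq> m \<Longrightarrow> \<sigma> n = pos_to_h (Phi E) n" for n by (simp add: \<sigma>_def)
  note a = arj[OF ar]
  from m k consider "m=1" "k=1" | "m=1" "k=2" | "m=1" "k=3" | "m=2" "k=1" | "m=2" "k=2" | "m=2" "k=3"
    | "m=3" "k=1" | "m=3" "k=2" | "m=3" "k=3" by auto
  hence "payoff 3 \<gamma> \<epsilon> m \<sigma> ([u,u,w],k) \<le> payoff 3 \<gamma> \<epsilon> m (pos_to_h (Phi E)) ([u,u,w],k)"
  proof cases
    case 1 thus ?thesis using o1_f2[OF s[unfolded 1] Lm[unfolded 1] F, where \<gamma>=\<gamma> and \<epsilon>=\<epsilon> and m=m] a PV[where \<gamma>=\<gamma> and \<epsilon>=\<epsilon> and m=m] rw1 rw2 by auto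
  next
    case 2 thus ?thesis using o2_f2[OF s[unfolded 2] F, where \<gamma>=\<gamma> and \<epsilon>=\<epsilon> and m=m] PV[where \<gamma>=\<gamma> and \<epsilon>=\<epsilon> and m=m] by auto
  next
    case 3 thus ?thesis using o3_f23[OF s[unfolded 3] Lm[unfolded 3] F F, where \<gamma>=\<gamma> and \<epsilon>=\<epsilon> and m=m] a PV[where \<gamma>=\<gamma> and \<epsilon>=\<epsilon> and m=m] rw1 rw2 by auto
  next
    case 4 thus ?thesis using o1_f1[OF s[unfolded 4] F, where \<gamma>=\<gamma> and \<epsilon>=\<epsilon> and m=m] PV[where \<gamma>=\<gamma> and \<epsilon>=\<epsilon> and m=m] by auto
  next
    case 5 thus ?thesis using o2_f13[OF s[unfolded 5] Lm[unfolded 5] F F, where \<gamma>=\<gamma> and \<epsilon>=\<epsilon> and m=m] a PV[where \<gamma>=\<gamma> and \<epsilon>=\<epsilon> and m=m] rw1 rw2 by auto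
  next
    case 6 thus ?thesis using o3_f31[OF s[unfolded 6] F F, where \<gamma>=\<gamma> and \<epsilon>=\<epsilon> and m=m] PV[where \<gamma>=\<gamma> and \<epsilon>=\<epsilon> and m=m] by auto
  next
    case 7 thus ?thesis using o1_f1[OF s[unfolded 7] F, where \<gamma>=\<gamma> and \<epsilon>=\<epsilon> and m=m] PV[where \<gamma>=\<gamma> and \<epsilon>=\<epsilon> and m=m] by auto
  next
    case 8 thus ?thesis using o2_f2[OF s[unfolded 8] F, where \<gamma>=\<gamma> and \<epsilon>=\<epsilon> and m=m] PV[where \<gamma>=\<gamma> and \<epsilon>=\<epsilon> and m=m] by auto
  next
    case 9 thus ?thesis using o3_f1[OF s[unfolded 9] Lm[unfolded 9] F, where \<gamma>=\<gamma> and \<epsilon>=\<epsilon> and m=m] a PV[where \<gamma>=\<gamma> and \<epsilon>=\<epsilon> and m=m] by (auto simp: rwR)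
  qed
  thus ?thesis by (simp add: \<sigma>_def)
qed

lemma clause2:
  fixes \<epsilon> \<gamma> :: real
  assumes L: "\<forall>n\<in>{1..3}. n \<noteq> m \<longrightarrow> legal_h E n (\<tau> n)" and m: "m \<in> {1,2,3}" and k: "k \<in> {1,2,3}"
    and ar: "0 \<le> \<epsilon>" "\<epsilon> \<le> 1/2" "0 < \<gamma>" "\<gamma> < 1"
    and A: "m \<noteq> 3 \<longrightarrow> \<epsilon> \<le> (1-\<epsilon>)*\<gamma>^2 \<and> (1-\<epsilon>)*\<gamma> \<le> 1/2"
  shows "payoff 3 \<gamma> \<epsilon> m (pos_to_h (Phi E)) ([u,u,w],k) \<le> payoff 3 \<gamma> \<epsilon> m (\<tau>(m := pos_to_h (Phi E) m)) ([u,u,w],k)"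
proof -
  define \<sigma> where "\<sigma> = \<tau>(m := pos_to_h (Phi E) m)"
  have s: "play 3 \<sigma> ([u,u,w],k) 0 = ([u,u,w],k)" by (simp add: play_0)
  have Ln: "n \<in> {1,2,3} \<Longrightarrow> n \<noteq> m \<Longrightarrow> legal_h E n (\<sigma> n)" for n using L by (auto simp: \<sigma>_def)
  have F: "\<sigma> m = pos_to_h (Phi E) m" by (simp add: \<sigma>_def)
  note a = arj[OF ar]
  from m k consider "m=1" "k=1" | "m=1" "k=2" | "m=1" "k=3" | "m=2" "k=1" | "m=2" "k=2" | "m=2" "k=3"
    | "m=3" "k=1" | "m=3" "k=2" | "m=3" "k=3" by auto
  hence "payoff 3 \<gamma> \<epsilon> m (pos_to_h (Phi E)) ([u,u,w],k) \<le> payoff 3 \<gamma> \<epsilon> m \<sigma> ([u,u,w],k)"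
  proof cases
    case 1 thus ?thesis using o1_f1[OF s[unfolded 1] F[unfolded 1], where \<gamma>=\<gamma> and \<epsilon>=\<epsilon> and m=m] PV[where \<gamma>=\<gamma> and \<epsilon>=\<epsilon> and m=m] by auto
  next
    case 2
    have b: "\<epsilon> \<le> (1-\<epsilon>)*\<gamma>^2" "(1-\<epsilon>)*\<gamma> \<le> 1/2" using A 2 by auto
    note i = ari[OF ar b]
    show ?thesis using 2 o2_f1[OF s[unfolded 2] Ln Ln F[unfolded 2], where \<gamma>=\<gamma> and \<epsilon>=\<epsilon> and m=m] i PV[where \<gamma>=\<gamma> and \<epsilon>=\<epsilon> and m=m] by (auto simp: rw1 rw2 rw3 rwS)
  next
    case 3
    have b: "\<epsilon> \<le> (1-\<epsilon>)*\<gamma>^2" "(1-\<epsilon>)*\<gamma> \<le> 1/2" using A 3 by auto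
    note i = ari[OF ar b]
    show ?thesis using 3 o3_f1[OF s[unfolded 3] Ln F[unfolded 3], where \<gamma>=\<gamma> and \<epsilon>=\<epsilon> and m=m] i PV[where \<gamma>=\<gamma> and \<epsilon>=\<epsilon> and m=m] by (auto simp: rw1 rw2 rw3 rwS)
  next
    case 4
    have b: "\<epsilon> \<le> (1-\<epsilon>)*\<gamma>^2" "(1-\<epsilon>)*\<gamma> \<le> 1/2" using A 4 by auto
    note i = ari[OF ar b]
    show ?thesis using 4 o1_f2[OF s[unfolded 4] Ln F[unfolded 4], where \<gamma>=\<gamma> and \<epsilon>=\<epsilon> and m=m] i PV[where \<gamma>=\<gamma> and \<epsilon>=\<epsilon> and m=m] by (auto simp: rw1 rw2 rw3 rwS)
  next
    case 5 thus ?thesis using o2_f2[OF s[unfolded 5] F[unfolded 5], where \<gamma>=\<gamma> and \<epsilon>=\<epsilon> and m=m] PV[where \<gamma>=\<gamma> and \<epsilon>=\<epsilon> and m=m] by auto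
  next
    case 6
    have b: "\<epsilon> \<le> (1-\<epsilon>)*\<gamma>^2" "(1-\<epsilon>)*\<gamma> \<le> 1/2" using A 6 by auto
    note i = ari[OF ar b]
    show ?thesis using 6 o3_f2[OF s[unfolded 6] Ln Ln F[unfolded 6], where \<gamma>=\<gamma> and \<epsilon>=\<epsilon> and m=m] i PV[where \<gamma>=\<gamma> and \<epsilon>=\<epsilon> and m=m] by (auto simp: rw1 rw2 rw3 rwS)
  next
    case 7
    have "- (\<gamma>^1) \<le> payoff 3 \<gamma> \<epsilon> 3 \<sigma> ([u,u,w],k)"
      by (rule payoff3_lb) (use ar capS s in \<open>auto simp: play_0\<close>)
    thus ?thesis using 7 PV[where \<gamma>=\<gamma> and \<epsilon>=\<epsilon> and m=m] by (auto simp: rwR)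
  next
    case 8
    have "- (\<gamma>^1) \<le> payoff 3 \<gamma> \<epsilon> 3 \<sigma> ([u,u,w],k)"
      by (rule payoff3_lb) (use ar capS s in \<open>auto simp: play_0\<close>)
    thus ?thesis using 8 PV[where \<gamma>=\<gamma> and \<epsilon>=\<epsilon> and m=m] by (auto simp: rwR)
  next
    case 9
    have p1: "play 3 \<sigma> ([u,u,w],k) 1 = ([u,u,w],1)" using o3_f3[OF s[unfolded 9] F[unfolded 9]] 9 by simp
    have "- (\<gamma>^2) \<le> payoff 3 \<gamma> \<epsilon> 3 \<sigma> ([u,u,w],k)"
      by (rule payoff3_lb) (use ar capS s p1 in \<open>auto simp: play_0 less_2_cases_iff\<close>)
    thus ?thesis using 9 PV[where \<gamma>=\<gamma> and \<epsilon>=\<epsilon> and m=m] by (auto simp: rwR)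
  qed
  thus ?thesis by (simp add: \<sigma>_def)
qed

end

lemma graph2:
  assumes "simple_connected_graph V E" "card V = 2"
  obtains a b where "V = {a,b}" "a \<noteq> b" "cnb E a = {a,b}" "cnb E b = {a,b}"
proof -
  obtain a b where V: "V = {a,b}" and ab: "a \<noteq> b" using assms(2) by (auto simp: card_2_iff)
  have inV: "E x y \<Longrightarrow> x \<in> V \<and> y \<in> V" for x y using assms(1) by (auto simp: simple_connected_graph_def)
  have irr: "\<not> E x x" for x using assms(1) by (auto simp: simple_connected_graph_def)
  have sym: "E x y \<Longrightarrow> E y x" for x y using assms(1) by (auto simp: simple_connected_graph_def)
  have "(a, b) \<in> {(x, y). E x y}\<^sup>*" using assms(1) V by (auto simp: simple_connected_graph_def)
  then have Eab: "E a b"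
  proof (cases rule: converse_rtranclE)
    case base thus ?thesis using ab by simp
  next
    case (step y)
    hence "E a y" by simp
    hence "y = b" using inV[of a y] irr[of a] V by auto
    thus ?thesis using \<open>E a y\<close> by simp
  qed
  have "cnb E a = {a,b}" using Eab inV irr V by (auto simp: cnb_def)
  moreover have "cnb E b = {a,b}" using sym[OF Eab] inV irr V by (auto simp: cnb_def)
  ultimately show ?thesis using that V ab by blast
qed

lemma rep:
  assumes V: "V = {a,b}" "a \<noteq> b" "cnb E a = {a,b}" "cnb E b = {a,b}"
    and vs: "valid_state V 3 s" and nc: "\<not> capture 3 s"
  obtains u w k where "s = ([u,u,w],k)" "k \<in> {1,2,3}" "P2 E u w" "V = {u,w}"
proof -
  obtain xs k where s: "s = (xs,k)" by (cases s)
  have "length xs = 3" using vs s by (simp add: valid_state_def)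
  then obtain x y z where xs: "xs = [x,y,z]"
    by (auto simp: numeral_3_eq_3 length_Suc_conv)
  have k: "k \<in> {1,2,3}" using vs s by (auto simp: valid_state_def)
  have xyz: "x \<in> V" "y \<in> V" "z \<in> V" using vs s xs by (auto simp: valid_state_def)
  have ne: "x \<noteq> z" "y \<noteq> z" using nc s xs by (auto simp: capture3 pos_def)
  hence "x = y" using xyz V by auto
  have P: "P2 E x z" using ne xyz V by unfold_locales auto
  have "V = {x,z}" using ne xyz V by auto
  thus ?thesis using that[of x z k] s xs \<open>x = y\<close> k P by simp
qed

lemma opt_Phi:
  fixes \<epsilon> \<gamma> :: real
  assumes V: "V = {a,b}" "a \<noteq> b" "cnb E a = {a,b}" "cnb E b = {a,b}"
    and ar: "0 \<le> \<epsilon>" "\<epsilon> \<le> 1/2" "0 < \<gamma>" "\<gamma> < 1"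
    and A: "m \<noteq> 3 \<longrightarrow> \<epsilon> \<le> (1-\<epsilon>)*\<gamma>^2 \<and> (1-\<epsilon>)*\<gamma> \<le> 1/2"
    and m: "m \<in> {1,2,3}"
  shows "opt_pair V E 3 \<gamma> \<epsilon> m (Phi E)"
  unfolding opt_pair_def
proof (intro conjI allI impI ballI)
  fix n show "legal_p E n (Phi E n)" by (rule legal_Phi)
next
  fix s0 \<tau> assume s0: "valid_state V 3 s0 \<and> \<not> capture 3 s0" and L: "legal_h E m \<tau>"
  obtain u w k where s: "s0 = ([u,u,w],k)" "k \<in> {1,2,3}" "P2 E u w" using rep[OF V] s0 by metis
  show "payoff 3 \<gamma> \<epsilon> m ((pos_to_h (Phi E))(m := \<tau>)) s0 \<le> payoff 3 \<gamma> \<epsilon> m (pos_to_h (Phi E)) s0"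
    using P2.clause1[OF s(3) L m s(2) ar] s(1) by simp
next
  fix s0 \<tau> assume s0: "valid_state V 3 s0 \<and> \<not> capture 3 s0"
    and L: "\<forall>n\<in>{1..3}. n \<noteq> m \<longrightarrow> legal_h E n (\<tau> n)"
  obtain u w k where s: "s0 = ([u,u,w],k)" "k \<in> {1,2,3}" "P2 E u w" using rep[OF V] s0 by metis
  show "payoff 3 \<gamma> \<epsilon> m (pos_to_h (Phi E)) s0 \<le> payoff 3 \<gamma> \<epsilon> m (\<tau>(m := pos_to_h (Phi E) m)) s0"
    using P2.clause2[OF s(3) L m s(2) ar A] s(1) by simp
qed


lemma is_hist_reach: "is_hist E N s0 h \<Longrightarrow> i < length h \<Longrightarrow> reach E N s0 (h ! i)"
proof (induction i)
  case 0 thus ?case by (auto simp: is_hist_def hd_conv_nth[symmetric] intro: reach.refl)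
next
  case (Suc i)
  hence "reach E N s0 (h ! i)" by simp
  moreover obtain v where "\<not> capture N (h ! i)" "v \<in> cnb E (pos (h ! i) (mover (h ! i)))"
    "h ! Suc i = move N (h ! i) v" using Suc.prems unfolding is_hist_def by blast
  ultimately show ?case by (simp add: reach.step)
qed

context P2 begin

lemma reach_form: assumes "reach E 3 s0 s" "s0 = ([u,u,w],k0)" "k0 \<in> {1,2,3}"
  shows "capture 3 s \<or> (\<exists>k\<in>{1,2,3}. s = ([u,u,w],k))"
  using assms(1)
proof (induction rule: reach.induct)
  case refl thus ?case using assms by auto
next
  case (step s v)
  then obtain k where k: "k \<in> {1,2,3}" "s = ([u,u,w],k)" by auto
  have "v \<in> cnb E ([u,u,w] ! (k - 1))" using step(3) k by (simp add: pos_def mover_def)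
  moreover have "[u,u,w] ! (k - 1) = u \<or> [u,u,w] ! (k - 1) = w" using k(1) by auto
  ultimately have v: "v = u \<or> v = w" using cu cw by (metis empty_iff insert_iff)
  have mv: "move 3 s v = ([u,u,w][k - 1 := v], k mod 3 + 1)" using k by (simp add: move_def)
  from k(1) v show ?case unfolding mv
    by (elim insertE disjE) (auto simp: capture3 pos_def)
qed

lemma reach_next: assumes "reach E 3 s0 ([u,u,w],k)" "k \<in> {1,2,3}"
  shows "reach E 3 s0 ([u,u,w], if k = 1 then 2 else if k = 2 then 3 else 1)"
proof -
  have "reach E 3 s0 (move 3 ([u,u,w],k) (pos ([u,u,w],k) (mover ([u,u,w],k))))"
    by (rule reach.step[OF assms(1) capS]) (simp add: cnb_self)
  moreover have "move 3 ([u,u,w],k) (pos ([u,u,w],k) (mover ([u,u,w],k))) =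
     ([u,u,w], if k = 1 then 2 else if k = 2 then 3 else 1)"
    using assms(2) by (auto simp: move_def pos_def mover_def)
  ultimately show ?thesis by simp
qed

lemma reach_all: assumes "k0 \<in> {1,2,3}" "k \<in> {1,2,3}"
  shows "reach E 3 ([u,u,w],k0) ([u,u,w],k)"
proof -
  have r0: "reach E 3 ([u,u,w],k0) ([u,u,w],k0)" by (rule reach.refl)
  from assms show ?thesis
    by (elim insertE emptyE; simp;
        use reach_next[OF r0] reach_next[OF reach_next[OF r0]] r0 in \<open>simp\<close>)
qed

lemma CRdet:
  fixes \<epsilon> \<gamma> :: real
  assumes V: "V = {u,w}" and CR: "CR_opt V E 3 \<gamma> \<epsilon> n \<sigma>" and n: "n \<in> {1,2,3}"
    and g: "0 < \<gamma>" "\<gamma> < 1"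
  shows "\<sigma> ([u,u,w],n) = w"
proof -
  obtain \<phi> where op: "opt_pair V E 3 \<gamma> \<epsilon> 3 \<phi>" and \<phi>n: "\<phi> n = \<sigma>"
    using CR unfolding CR_opt_def by blast
  have vs: "valid_state V 3 ([u,u,w],n) \<and> \<not> capture 3 ([u,u,w],n)"
    using V n capS by (auto simp: valid_state_def)
  have "legal_p E n (\<phi> n)" using op n unfolding opt_pair_def by auto
  hence "\<sigma> ([u,u,w],n) \<in> cnb E ([u,u,w] ! (n - 1))" using \<phi>n by (simp add: legal_p_def pos_def mover_def)
  moreover have "[u,u,w] ! (n - 1) = u \<or> [u,u,w] ! (n - 1) = w" using n by auto
  ultimately have val: "\<sigma> ([u,u,w],n) = u \<or> \<sigma> ([u,u,w],n) = w" using cu cw by (metis empty_iff insert_iff)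
  have gg: "\<gamma>^2 < \<gamma>" using g by (simp add: power2_eq_square)
  show ?thesis
  proof (rule ccontr)
    assume "\<sigma> ([u,u,w],n) \<noteq> w"
    hence su: "\<sigma> ([u,u,w],n) = u" using val by simp
    define \<sigma>0 where "\<sigma>0 = pos_to_h \<phi>"
    have s: "play 3 \<sigma>0 ([u,u,w],n) 0 = ([u,u,w],n)" by (simp add: play_0)
    have c0: "\<sigma>0 n (hist 3 \<sigma>0 ([u,u,w],n) 0) = u"
      using su \<phi>n by (simp add: \<sigma>0_def pos_to_h_def)
    have p1: "play 3 \<sigma>0 ([u,u,w],n) 1 = ([u,u,w][n - 1 := u], n mod 3 + 1)"
      using stepV[OF s c0] by simp
    from n consider "n = 1" | "n = 2" | "n = 3" by auto
    thus False
    proof cases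
      case 3
      have p1': "play 3 \<sigma>0 ([u,u,w],n) 1 = ([u,u,u],1)" using p1 3 by simp
      have pv: "payoff 3 \<gamma> \<epsilon> 3 \<sigma>0 ([u,u,w],n) = -\<gamma>"
        using pay1[OF s[unfolded 3] p1'[unfolded 3] cap3, where \<gamma>=\<gamma> and \<epsilon>=\<epsilon> and m=3] 3 by (simp add: rwR)
      define \<tau> :: "'v hstrat" where "\<tau> = (\<lambda>h. pos (last h) 3)"
      have L: "legal_h E 3 \<tau>" by (simp add: legal_h_def \<tau>_def cnb_self)
      define \<sigma>1 where "\<sigma>1 = \<sigma>0(3 := \<tau>)"
      have s1: "play 3 \<sigma>1 ([u,u,w],n) 0 = ([u,u,w],n)" by (simp add: play_0)
      have c1: "\<sigma>1 n (hist 3 \<sigma>1 ([u,u,w],n) 0) = w" using 3 by (simp add: \<sigma>1_def \<tau>_def pos_def)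
      have q1: "play 3 \<sigma>1 ([u,u,w],n) 1 = ([u,u,w],1)" using stepV[OF s1 c1] 3 by simp
      have "- (\<gamma>^2) \<le> payoff 3 \<gamma> \<epsilon> 3 \<sigma>1 ([u,u,w],n)"
        by (rule payoff3_lb) (use g capS s1 q1 in \<open>auto simp: less_2_cases_iff\<close>)
      moreover have "payoff 3 \<gamma> \<epsilon> 3 \<sigma>1 ([u,u,w],n) \<le> payoff 3 \<gamma> \<epsilon> 3 \<sigma>0 ([u,u,w],n)"
        using op vs L unfolding opt_pair_def \<sigma>1_def \<sigma>0_def by blast
      ultimately show False using pv gg by simp
    next
      case 1
      have p1': "play 3 \<sigma>0 ([u,u,w],n) 1 = ([u,u,w],2)" using p1 1 by simp
      have "- (\<gamma>^2) \<le> payoff 3 \<gamma> \<epsilon> 3 \<sigma>0 ([u,u,w],n)"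
        by (rule payoff3_lb) (use g capS s p1' in \<open>auto simp: less_2_cases_iff\<close>)
      moreover have "payoff 3 \<gamma> \<epsilon> 3 \<sigma>0 ([u,u,w],n) \<le>
          payoff 3 \<gamma> \<epsilon> 3 ((pos_to_h (Phi E))(3 := pos_to_h \<phi> 3)) ([u,u,w],n)"
        using op vs legal_h_Phi unfolding opt_pair_def \<sigma>0_def by blast
      moreover have "payoff 3 \<gamma> \<epsilon> 3 ((pos_to_h (Phi E))(3 := pos_to_h \<phi> 3)) ([u,u,w],n) = -\<gamma>"
        using o1_f1[where \<sigma>="(pos_to_h (Phi E))(3 := pos_to_h \<phi> 3)" and \<gamma>=\<gamma> and \<epsilon>=\<epsilon> and m=3] 1
        by (simp add: play_0 rwR)
      ultimately show False using gg by simp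
    next
      case 2
      have p1': "play 3 \<sigma>0 ([u,u,w],n) 1 = ([u,u,w],3)" using p1 2 by simp
      have "- (\<gamma>^2) \<le> payoff 3 \<gamma> \<epsilon> 3 \<sigma>0 ([u,u,w],n)"
        by (rule payoff3_lb) (use g capS s p1' in \<open>auto simp: less_2_cases_iff\<close>)
      moreover have "payoff 3 \<gamma> \<epsilon> 3 \<sigma>0 ([u,u,w],n) \<le>
          payoff 3 \<gamma> \<epsilon> 3 ((pos_to_h (Phi E))(3 := pos_to_h \<phi> 3)) ([u,u,w],n)"
        using op vs legal_h_Phi unfolding opt_pair_def \<sigma>0_def by blast
      moreover have "payoff 3 \<gamma> \<epsilon> 3 ((pos_to_h (Phi E))(3 := pos_to_h \<phi> 3)) ([u,u,w],n) = -\<gamma>"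
        using o2_f2[where \<sigma>="(pos_to_h (Phi E))(3 := pos_to_h \<phi> 3)" and \<gamma>=\<gamma> and \<epsilon>=\<epsilon> and m=3] 2
        by (simp add: play_0 rwR)
      ultimately show False using gg by simp
    qed
  qed
qed

end

lemma cond_equiv:
  fixes \<epsilon> \<gamma> :: real assumes ar: "0 \<le> \<epsilon>" "\<epsilon> \<le> 1/2" "0 < \<gamma>" "\<gamma> < 1"
  shows "(\<epsilon> < 1/2 \<and> sqrt (\<epsilon> / (1 - \<epsilon>)) \<le> \<gamma> \<and> \<gamma> \<le> 1 / (2 - 2 * \<epsilon>)) \<longleftrightarrow>
         (\<epsilon> \<le> (1-\<epsilon>)*\<gamma>^2 \<and> (1-\<epsilon>)*\<gamma> \<le> 1/2)"
proof -
  have e1: "0 < 1 - \<epsilon>" using ar by simp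
  have s: "sqrt (\<epsilon> / (1 - \<epsilon>)) \<le> \<gamma> \<longleftrightarrow> \<epsilon> \<le> (1-\<epsilon>)*\<gamma>^2"
  proof
    assume "sqrt (\<epsilon> / (1 - \<epsilon>)) \<le> \<gamma>"
    hence "\<epsilon> / (1 - \<epsilon>) \<le> \<gamma>^2" by (rule sqrt_le_D)
    thus "\<epsilon> \<le> (1-\<epsilon>)*\<gamma>^2" using e1 by (simp add: divide_le_eq mult.commute)
  next
    assume "\<epsilon> \<le> (1-\<epsilon>)*\<gamma>^2"
    hence "\<epsilon> / (1 - \<epsilon>) \<le> \<gamma>^2" using e1 by (simp add: divide_le_eq mult.commute)
    thus "sqrt (\<epsilon> / (1 - \<epsilon>)) \<le> \<gamma>" using ar by (intro real_le_lsqrt) auto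
  qed
  have t: "\<gamma> \<le> 1 / (2 - 2 * \<epsilon>) \<longleftrightarrow> (1-\<epsilon>)*\<gamma> \<le> 1/2"
    using e1 by (simp add: le_divide_eq algebra_simps)
  have u: "\<epsilon> \<le> (1-\<epsilon>)*\<gamma>^2 \<Longrightarrow> \<epsilon> < 1/2"
  proof (rule ccontr)
    assume a: "\<epsilon> \<le> (1-\<epsilon>)*\<gamma>^2" "\<not> \<epsilon> < 1/2"
    hence "\<epsilon> = 1/2" using ar by simp
    hence "1 \<le> \<gamma>^2" using a(1) by (simp only:) simp
    moreover have "\<gamma>^2 < 1" using ar by (simp add: power_less_one_iff)
    ultimately show False by simp
  qed
  show ?thesis using s t u by blast
qed

context P2 begin

lemma PT_val:
  fixes \<epsilon> \<gamma> :: real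
  assumes V: "V = {u,w}" and PT: "positional_trigger V E 3 \<gamma> \<epsilon> s0 \<phi>"
    and s0: "s0 = ([u,u,w],k0)" "k0 \<in> {1,2,3}" and g: "0 < \<gamma>" "\<gamma> < 1"
    and m: "m \<in> {1..3}" and n: "n \<in> {1..3}"
    and r: "reach E 3 s0 s" "mover s = n" "\<not> capture 3 s"
  shows "\<phi> m n s = pos s 3"
proof -
  obtain \<sigma> where CR: "CR_opt V E 3 \<gamma> \<epsilon> n \<sigma>"
    and ag: "\<forall>s. reach E 3 s0 s \<and> mover s = n \<and> \<not> capture 3 s \<longrightarrow> \<phi> m n s = \<sigma> s"
    using PT m n unfolding positional_trigger_def by blast
  obtain k where k: "k \<in> {1,2,3}" "s = ([u,u,w],k)" using reach_form[OF r(1) s0] r(3) by auto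
  have kn: "k = n" using k r(2) by (simp add: mover_def)
  have n3: "n \<in> {1,2,3}" using n by auto
  have "\<sigma> ([u,u,w],n) = w" by (rule CRdet[OF V CR n3 g])
  thus ?thesis using ag r k kn by (simp add: pos_def)
qed

end


lemma last_hist: "last (hist N \<sigma> s0 t) = play N \<sigma> s0 t" by (simp add: play_def)

theorem mainTheorem1:
  fixes V :: "'v set" and E :: "'v \<Rightarrow> 'v \<Rightarrow> bool"
    and \<gamma> \<epsilon> :: real and s0 :: "'v state"
  assumes "simple_connected_graph V E" and "card V = 2"
    and "0 \<le> \<epsilon>" and "\<epsilon> \<le> 1/2"
    and "0 < \<gamma>" and "\<gamma> < 1"
    and "valid_state V 3 s0" and "\<not> capture 3 s0"
  shows "((\<exists>\<phi>. positional_trigger V E 3 \<gamma> \<epsilon> s0 \<phi>) \<longleftrightarrow>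
            (\<epsilon> < 1/2 \<and> sqrt (\<epsilon> / (1 - \<epsilon>)) \<le> \<gamma> \<and> \<gamma> \<le> 1 / (2 - 2 * \<epsilon>)))
         \<and> (\<forall>\<phi> \<phi>'. positional_trigger V E 3 \<gamma> \<epsilon> s0 \<phi> \<and> positional_trigger V E 3 \<gamma> \<epsilon> s0 \<phi>' \<longrightarrow>
              (\<forall>n\<in>{1..3}. \<forall>h. is_hist E 3 s0 h \<and> mover (last h) = n \<and> \<not> capture 3 (last h) \<longrightarrow>
                  trigger_strat 3 \<phi> n h = trigger_strat 3 \<phi>' n h))"
proof -
  obtain a b where G: "V = {a,b}" "a \<noteq> b" "cnb E a = {a,b}" "cnb E b = {a,b}"
    using graph2[OF assms(1,2)] by blast
  obtain u w k0 where s0: "s0 = ([u,u,w],k0)" "k0 \<in> {1,2,3}" "P2 E u w" "V = {u,w}"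
    using rep[OF G assms(7,8)] by blast
  interpret P2 E u w by (rule s0(3))
  note ar = assms(3-6)
  have vs: "k \<in> {1,2,3} \<Longrightarrow> valid_state V 3 ([u,u,w],k) \<and> \<not> capture 3 ([u,u,w],k)" for k
    using s0(4) capS by (auto simp: valid_state_def)
  have fwd: "\<epsilon> \<le> (1-\<epsilon>)*\<gamma>^2 \<and> (1-\<epsilon>)*\<gamma> \<le> 1/2" if PT: "positional_trigger V E 3 \<gamma> \<epsilon> s0 \<phi>" for \<phi>
  proof -
    define \<psi> where "\<psi> = \<phi> 1"
    have op: "opt_pair V E 3 \<gamma> \<epsilon> 1 \<psi>"
      using PT by (simp add: positional_trigger_def trigger_choice_def \<psi>_def)
    have val: "\<psi> k ([u,u,w],k) = w" if k: "k \<in> {1,2,3}" for k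
    proof -
      have "\<psi> k ([u,u,w],k) = pos ([u,u,w],k) 3"
        unfolding \<psi>_def
        by (rule PT_val[OF s0(4) PT s0(1,2) ar(3,4)]) (use k s0 reach_all[OF s0(2) k] capS in \<open>auto simp: mover_def\<close>)
      thus ?thesis by (simp add: pos_def)
    qed
    define \<tau>s :: "nat \<Rightarrow> 'v hstrat" where "\<tau>s = (\<lambda>n h. pos (last h) n)"
    have Ls: "\<forall>n\<in>{1..3}. n \<noteq> 1 \<longrightarrow> legal_h E n (\<tau>s n)" by (simp add: legal_h_def \<tau>s_def cnb_self)
    have c2: "payoff 3 \<gamma> \<epsilon> 1 (pos_to_h \<psi>) ([u,u,w],2) \<le> payoff 3 \<gamma> \<epsilon> 1 (\<tau>s(1 := pos_to_h \<psi> 1)) ([u,u,w],2)"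
      using op vs[of 2] Ls unfolding opt_pair_def by blast
    have e1: "payoff 3 \<gamma> \<epsilon> 1 (pos_to_h \<psi>) ([u,u,w],2) = \<epsilon>*\<gamma>"
    proof -
      have s: "play 3 (pos_to_h \<psi>) ([u,u,w],2) 0 = ([u,u,w],2)" by (simp add: play_0)
      have c: "pos_to_h \<psi> 2 (hist 3 (pos_to_h \<psi>) ([u,u,w],2) 0) = w"
        using val[of 2] by (simp add: pos_to_h_def last_hist play_0)
      have p1: "play 3 (pos_to_h \<psi>) ([u,u,w],2) 1 = ([u,w,w],3)" using stepV[OF s c] by simp
      show ?thesis using pay1[OF s p1 cap2, where \<gamma>=\<gamma> and \<epsilon>=\<epsilon> and m=1] by (simp add: rwS)
    qed
    have e2: "payoff 3 \<gamma> \<epsilon> 1 (\<tau>s(1 := pos_to_h \<psi> 1)) ([u,u,w],2) = (1-\<epsilon>)*\<gamma>^3"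
    proof -
      define \<sigma> where "\<sigma> = \<tau>s(1 := pos_to_h \<psi> 1)"
      have s: "play 3 \<sigma> ([u,u,w],2) 0 = ([u,u,w],2)" by (simp add: play_0)
      have c: "\<sigma> 2 (hist 3 \<sigma> ([u,u,w],2) 0) = u"
        by (simp add: \<sigma>_def \<tau>s_def last_hist play_0 pos_def)
      have p1: "play 3 \<sigma> ([u,u,w],2) 1 = ([u,u,w],3)" using stepV[OF s c] by simp
      have c1: "\<sigma> 3 (hist 3 \<sigma> ([u,u,w],2) 1) = w"
        using p1 by (simp add: \<sigma>_def \<tau>s_def last_hist pos_def del: hist.simps)
      have p2: "play 3 \<sigma> ([u,u,w],2) 2 = ([u,u,w],1)" using stepV[OF p1 c1] by (simp add: numeral_2_eq_2 del: hist.simps)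
      have c2: "\<sigma> 1 (hist 3 \<sigma> ([u,u,w],2) 2) = w"
        using p2 val[of 1] by (simp add: \<sigma>_def pos_to_h_def last_hist del: hist.simps)
      have q: "Suc 2 = (3::nat)" "[u,u,w][1 - 1 := w] = [w,u,w]" "1 mod 3 + 1 = (2::nat)" by simp_all
      have p3: "play 3 \<sigma> ([u,u,w],2) 3 = ([w,u,w],2)" using stepV[OF p2 c2] unfolding q .
      show ?thesis unfolding \<sigma>_def[symmetric] using pay3[OF s p1 p2 p3 cap1, where \<gamma>=\<gamma> and \<epsilon>=\<epsilon> and m=1] by (simp add: rwS)
    qed
    define \<tau>r :: "nat \<Rightarrow> 'v hstrat" where
      "\<tau>r = (\<lambda>n h. if pos (last h) 1 \<in> cnb E (pos (last h) n) then pos (last h) 1 else pos (last h) n)"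
    have Lr: "\<forall>n\<in>{1..3}. n \<noteq> 1 \<longrightarrow> legal_h E n (\<tau>r n)" by (simp add: legal_h_def \<tau>r_def cnb_self)
    have c3: "payoff 3 \<gamma> \<epsilon> 1 (pos_to_h \<psi>) ([u,u,w],3) \<le> payoff 3 \<gamma> \<epsilon> 1 (\<tau>r(1 := pos_to_h \<psi> 1)) ([u,u,w],3)"
      using op vs[of 3] Lr unfolding opt_pair_def by blast
    have e3: "payoff 3 \<gamma> \<epsilon> 1 (pos_to_h \<psi>) ([u,u,w],3) = (1-\<epsilon>)*\<gamma>^2"
    proof -
      have s: "play 3 (pos_to_h \<psi>) ([u,u,w],3) 0 = ([u,u,w],3)" by (simp add: play_0)
      have c: "pos_to_h \<psi> 3 (hist 3 (pos_to_h \<psi>) ([u,u,w],3) 0) = w"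
        using val[of 3] by (simp add: pos_to_h_def last_hist play_0)
      have p1: "play 3 (pos_to_h \<psi>) ([u,u,w],3) 1 = ([u,u,w],1)" using stepV[OF s c] by simp
      have c1: "pos_to_h \<psi> 1 (hist 3 (pos_to_h \<psi>) ([u,u,w],3) 1) = w"
        using p1 val[of 1] by (simp add: pos_to_h_def last_hist del: hist.simps)
      have p2: "play 3 (pos_to_h \<psi>) ([u,u,w],3) 2 = ([w,u,w],2)" using stepV[OF p1 c1] by (simp add: numeral_2_eq_2 del: hist.simps)
      show ?thesis using pay2[OF s p1 p2 cap1, where \<gamma>=\<gamma> and \<epsilon>=\<epsilon> and m=1] by (simp add: rwS)
    qed
    have e4: "payoff 3 \<gamma> \<epsilon> 1 (\<tau>r(1 := pos_to_h \<psi> 1)) ([u,u,w],3) = \<gamma>/2"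
    proof -
      define \<sigma> where "\<sigma> = \<tau>r(1 := pos_to_h \<psi> 1)"
      have s: "play 3 \<sigma> ([u,u,w],3) 0 = ([u,u,w],3)" by (simp add: play_0)
      have c: "\<sigma> 3 (hist 3 \<sigma> ([u,u,w],3) 0) = u"
        using cw by (simp add: \<sigma>_def \<tau>r_def last_hist play_0 pos_def)
      have p1: "play 3 \<sigma> ([u,u,w],3) 1 = ([u,u,u],1)" using stepV[OF s c] by simp
      show ?thesis unfolding \<sigma>_def[symmetric] using pay1[OF s p1 cap3, where \<gamma>=\<gamma> and \<epsilon>=\<epsilon> and m=1] by (simp add: rwS)
    qed
    have i1: "\<epsilon>*\<gamma> \<le> ((1-\<epsilon>)*\<gamma>^2)*\<gamma>" using c2 e1 e2 by (simp add: power3_eq_cube power2_eq_square algebra_simps)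
    have i2: "((1-\<epsilon>)*\<gamma>)*\<gamma> \<le> (1/2)*\<gamma>" using c3 e3 e4 by (simp add: power2_eq_square algebra_simps)
    show ?thesis using mult_right_le_imp_le[OF i1] mult_right_le_imp_le[OF i2] ar by auto
  qed
  have bwd: "positional_trigger V E 3 \<gamma> \<epsilon> s0 (\<lambda>m. Phi E)"
    if A: "\<epsilon> \<le> (1-\<epsilon>)*\<gamma>^2 \<and> (1-\<epsilon>)*\<gamma> \<le> 1/2"
  proof -
    have op: "m \<in> {1..3} \<Longrightarrow> opt_pair V E 3 \<gamma> \<epsilon> m (Phi E)" for m
      by (rule opt_Phi[OF G ar]) (use A in auto)
    have "CR_opt V E 3 \<gamma> \<epsilon> n (Phi E n)" for n
      unfolding CR_opt_def using op[of 3] by auto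
    thus ?thesis using op unfolding positional_trigger_def trigger_choice_def by blast
  qed
  have uniq: "trigger_strat 3 \<phi> n h = trigger_strat 3 \<phi>' n h"
    if PT: "positional_trigger V E 3 \<gamma> \<epsilon> s0 \<phi>" "positional_trigger V E 3 \<gamma> \<epsilon> s0 \<phi>'"
      and n: "n \<in> {1..3}" and H: "is_hist E 3 s0 h" "mover (last h) = n" "\<not> capture 3 (last h)"
    for \<phi> \<phi>' n h
  proof -
    have mv: "mover (h ! i) \<in> {1..3}" if ii: "i < length h" "\<not> capture 3 (h ! i)" for i
    proof -
      obtain k where "k \<in> {1,2,3}" "h ! i = ([u,u,w],k)"
        using reach_form[OF is_hist_reach[OF H(1) ii(1)] s0(1,2)] ii(2) by auto
      thus ?thesis by (auto simp: mover_def)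
    qed
    have val: "\<psi> m (mover (h ! i)) (h ! i) = pos (h ! i) 3"
      if "positional_trigger V E 3 \<gamma> \<epsilon> s0 \<psi>" "m \<in> {1..3}" "i < length h" "\<not> capture 3 (h ! i)" for \<psi> m i
      by (rule PT_val[OF s0(4) that(1) s0(1,2) ar(3,4) that(2) mv[OF that(3,4)]
            is_hist_reach[OF H(1) that(3)] HOL.refl that(4)])
    have nc: "Suc t < length h \<Longrightarrow> \<not> capture 3 (h ! t)" for t using H(1) by (simp add: is_hist_def)
    have hne: "h \<noteq> []" using H(1) by (simp add: is_hist_def)
    have lh: "last h = h ! (length h - 1)" "length h - 1 < length h" using hne by (auto simp: last_conv_nth)
    have lastv: "\<psi> m n (last h) = pos (last h) 3"
      if "positional_trigger V E 3 \<gamma> \<epsilon> s0 \<psi>" "m \<in> {1..3}" for \<psi> m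
      using val[OF that lh(2)] H(2,3) lh(1) by simp
    define D where "D \<psi> = {t. Suc t < length h \<and> mover (h ! t) \<noteq> n \<and>
        h ! Suc t \<noteq> move 3 (h ! t) (\<psi> (mover (h ! t)) (mover (h ! t)) (h ! t))}" for \<psi> :: "nat \<Rightarrow> nat \<Rightarrow> 'v state \<Rightarrow> 'v"
    have DD: "D \<phi> = D \<phi>'"
      unfolding D_def
    proof (rule Collect_cong)
      fix t
      show "(Suc t < length h \<and> mover (h ! t) \<noteq> n \<and> h ! Suc t \<noteq> move 3 (h ! t) (\<phi> (mover (h ! t)) (mover (h ! t)) (h ! t))) =
            (Suc t < length h \<and> mover (h ! t) \<noteq> n \<and> h ! Suc t \<noteq> move 3 (h ! t) (\<phi>' (mover (h ! t)) (mover (h ! t)) (h ! t)))"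
      proof (cases "Suc t < length h")
        case True
        have "t < length h" using True by simp
        have m: "mover (h ! t) \<in> {1..3}" using mv[OF \<open>t < length h\<close> nc[OF True]] .
        have "\<phi> (mover (h ! t)) (mover (h ! t)) (h ! t) = \<phi>' (mover (h ! t)) (mover (h ! t)) (h ! t)"
          using val[OF PT(1) m \<open>t < length h\<close> nc[OF True]] val[OF PT(2) m \<open>t < length h\<close> nc[OF True]] by simp
        thus ?thesis by simp
      qed simp
    qed
    have ts: "trigger_strat 3 \<psi> n h = (if D \<psi> \<noteq> {} then \<psi> (mover (h ! Min (D \<psi>))) n (last h) else \<psi> n n (last h))" for \<psi>
      by (simp only: trigger_strat_def D_def Let_def)
    show ?thesis
    proof (cases "D \<phi> = {}")
      case True thus ?thesis using ts DD lastv[OF PT(1) n] lastv[OF PT(2) n] by simp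
    next
      case False
      have fin: "finite (D \<phi>)" unfolding D_def by (rule finite_subset[of _ "{..<length h}"]) auto
      have "Min (D \<phi>) \<in> D \<phi>" using Min_in[OF fin False] .
      hence "Suc (Min (D \<phi>)) < length h" unfolding D_def by simp
      hence m: "mover (h ! Min (D \<phi>)) \<in> {1..3}" using mv nc by simp
      show ?thesis using ts[of \<phi>] ts[of \<phi>'] DD False lastv[OF PT(1) m] lastv[OF PT(2) m] by simp
    qed
  qed
  show ?thesis using fwd bwd uniq cond_equiv[OF ar] by blast
qed

end
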